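(* In the family of directed acyclic graphs, the Geometric Mechanism satisfies incentive compatibility and fairness.
   Context: Setting: agents $N=\{1,\dots,n\}$ form a directed acyclic graph (DAG); an edge $(i,j)$ means $i$ follows $j$. Agent $i$'s type $\theta_i$ is her set of true out-edges; she reports $\theta_i'\subseteq\theta_i$ (she can only hide edges). $G(\theta')$ is the graph built from the report profile $\theta'$. $P_i$ is the set of agents that can reach $i$ by a directed path (including $i$), and $p_i=|P_i|$ is $i$'s progeny. Write $p_i\succ p_j$ if $p_i>p_j$, or $p_i=p_j$ and $i<j$. A selection mechanism maps each report profile to selection probabilities $x_i(\theta')\in[0,1]$ with $\sum_i x_i(\theta')\le 1$. Influential node: agent $i$ is influential in $G(\theta')$ if, after deleting all of $i$'s out-edges (profile $(\theta'_{-i},\emptyset)$), $p_i\succ p_j$ for all $j\neq i$ in that modified graph. The influential set $S^{inf.}(G(\theta'))=\{s_1,\dots,s_m\}$ is the set of influential nodes, ordered so that $s_1\succ s_2\succ\cdots\succ s_m$ by progeny in $G(\theta')$. Geometric Mechanism: compute $S^{inf.}(G(\theta'))=\{s_1,\dots,s_m\}$; select $s_j$ with probability $1/2^{m-j+1}$, and every agent outside the influential set with probability $0$. Incentive compatibility: for all $N$, all $i$, all true profiles $\theta$, all $\theta'_{-i}$ with $\theta'_k\subseteq\theta_k$ for $k\neq i$, and all $\theta_i'\subseteq\theta_i$, $x_i((\theta_i,\theta'_{-i}))\ge x_i((\theta_i',\theta'_{-i}))$. Fairness: for a graph $G=(N,E)$, let $G(i)=(P_i,E_i)$ be the subgraph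 induced by $i$'s progeny, with $E_i=\{(j,k)\in E: j,k\in P_i\}$. A mechanism is fair if for all $N$ and all DAGs $G,G'$ on $n$ nodes with $S^{inf.}(G)=S^{inf.}(G')=\{s_1,\dots,s_m\}$ and $G(s_1)=G'(s_1)$, we have $x_{s_1}(G)=x_{s_1}(G')$. *)

theory Defs
  imports Complex_Main
begin

text \<open>Agents are 1..n. A report profile is a function giving each agent her set of
 out-neighbours; the graph G(theta) has edge (i,j) iff i is an agent and j is in theta i
 (i follows j).\<close>

definition agents :: "nat \<Rightarrow> nat set" where
  "agents n = {1..n}"

definition graph_of :: "nat \<Rightarrow> (nat \<Rightarrow> nat set) \<Rightarrow> (nat \<times> nat) set" where
  "graph_of n \<theta> = {(i, j). i \<in> agents n \<and> j \<in> \<theta> i}"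

definition is_dag :: "nat \<Rightarrow> (nat \<times> nat) set \<Rightarrow> bool" where
  "is_dag n E \<longleftrightarrow> E \<subseteq> agents n \<times> agents n \<and> acyclic E"

definition progeny :: "nat \<Rightarrow> (nat \<times> nat) set \<Rightarrow> nat \<Rightarrow> nat set" where
  "progeny n E i = {j \<in> agents n. (j, i) \<in> E\<^sup>*}"

definition prog :: "nat \<Rightarrow> (nat \<times> nat) set \<Rightarrow> nat \<Rightarrow> nat" where
  "prog n E i = card (progeny n E i)"

definition prog_succ :: "nat \<Rightarrow> (nat \<times> nat) set \<Rightarrow> nat \<Rightarrow> nat \<Rightarrow> bool" where
  "prog_succ n E i j \<longleftrightarrow> prog n E i > prog n E j \<or> (prog n E i = prog n E j \<and> i < j)"

definition influential :: "nat \<Rightarrow> (nat \<times> nat) set \<Rightarrow> nat \<Rightarrow> bool" where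
  "influential n E i \<longleftrightarrow> i \<in> agents n \<and>
     (\<forall>j \<in> agents n. j \<noteq> i \<longrightarrow> prog_succ n (E - {i} \<times> UNIV) i j)"

definition inf_set :: "nat \<Rightarrow> (nat \<times> nat) set \<Rightarrow> nat set" where
  "inf_set n E = {i. influential n E i}"

text \<open>Geometric mechanism: if S = {s_1 \<succ> ... \<succ> s_m}, then s_j gets 1/2^(m-j+1);
 m-j+1 is the number of elements t of S with t = s_j or s_j \<succ> t (order in G).\<close>
definition geometric :: "nat \<Rightarrow> (nat \<times> nat) set \<Rightarrow> nat \<Rightarrow> real" where
  "geometric n E i =
     (if i \<in> inf_set n E
      then 1 / 2 ^ card {t \<in> inf_set n E. t = i \<or> prog_succ n E i t}
      else 0)"

type_synonym mechanism = "nat \<Rightarrow> (nat \<times> nat) set \<Rightarrow> nat \<Rightarrow> real"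

definition incentive_compatible :: "mechanism \<Rightarrow> bool" where
  "incentive_compatible x \<longleftrightarrow>
     (\<forall>n i \<theta> \<theta>'. is_dag n (graph_of n \<theta>) \<and> i \<in> agents n \<and>
        (\<forall>k \<in> agents n. \<theta>' k \<subseteq> \<theta> k) \<longrightarrow>
        x n (graph_of n (\<theta>'(i := \<theta> i))) i \<ge> x n (graph_of n \<theta>') i)"

definition induced_sub :: "nat \<Rightarrow> (nat \<times> nat) set \<Rightarrow> nat \<Rightarrow> nat set \<times> (nat \<times> nat) set" where
  "induced_sub n E i = (progeny n E i, E \<inter> (progeny n E i \<times> progeny n E i))"

definition fair :: "mechanism \<Rightarrow> bool" where
  "fair x \<longleftrightarrow>
     (\<forall>n G G' s1. is_dag n G \<and> is_dag n G' \<and> inf_set n G = inf_set n G' \<and>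
        s1 \<in> inf_set n G \<and> (\<forall>t \<in> inf_set n G. t \<noteq> s1 \<longrightarrow> prog_succ n G s1 t) \<and>
        (\<forall>t \<in> inf_set n G'. t \<noteq> s1 \<longrightarrow> prog_succ n G' s1 t) \<and>
        induced_sub n G s1 = induced_sub n G' s1
        \<longrightarrow> x n G s1 = x n G' s1)"

end

theory Submission
  imports Defs
begin

lemma pow_frac_le:
  assumes "(a::nat) \<le> b"
  shows "(1::real) / 2 ^ b \<le> 1 / 2 ^ a"
proof -
  have "(2::real) ^ a \<le> 2 ^ b" using assms by (rule power_increasing) simp
  then show ?thesis by (simp add: frac_le)
qed

lemma path_avoid:
  assumes "(j,t) \<in> E\<^sup>*" "(s,t) \<notin> E\<^sup>+"
  shows "(j,t) \<in> (E - {s}\<times>UNIV)\<^sup>*"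
  using assms(1)
proof (induction rule: converse_rtrancl_induct)
  case base
  then show ?case by simp
next
  case (step y z)
  have "y \<noteq> s" using step.hyps assms(2) by (metis rtrancl_into_trancl2)
  then have "(y,z) \<in> E - {s}\<times>UNIV" using step.hyps by auto
  then show ?case using step.IH by (meson converse_rtrancl_into_rtrancl)
qed

lemma progeny_del:
  assumes "(s,x) \<notin> E\<^sup>+"
  shows "progeny n (E - {s}\<times>UNIV) x = progeny n E x"
proof
  show "progeny n (E - {s}\<times>UNIV) x \<subseteq> progeny n E x"
    unfolding progeny_def using rtrancl_mono[of "E - {s}\<times>UNIV" E] by auto
  show "progeny n E x \<subseteq> progeny n (E - {s}\<times>UNIV) x"
    unfolding progeny_def using path_avoid[OF _ assms] by auto
qed

lemma progeny_fin: "finite (progeny n E x)"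
  unfolding progeny_def agents_def by auto

lemma prog_mono:
  assumes "E' \<subseteq> E"
  shows "prog n E' x \<le> prog n E x"
proof -
  have "progeny n E' x \<subseteq> progeny n E x"
    unfolding progeny_def using rtrancl_mono[OF assms] by auto
  then show ?thesis unfolding prog_def by (simp add: card_mono progeny_fin)
qed

lemma prog_lt:
  assumes "acyclic E" "(t,i) \<in> E\<^sup>+" "t \<in> agents n" "i \<in> agents n"
  shows "prog n E t < prog n E i"
proof -
  have sub: "progeny n E t \<subseteq> progeny n E i"
    unfolding progeny_def using assms(2) by auto
  have "i \<in> progeny n E i" unfolding progeny_def using assms by auto
  moreover have "i \<notin> progeny n E t"
  proof
    assume "i \<in> progeny n E t"
    then have "(i,t) \<in> E\<^sup>*" unfolding progeny_def by auto
    then have "(i,i) \<in> E\<^sup>+" using assms(2) by auto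
    then show False using assms(1) unfolding acyclic_def by auto
  qed
  ultimately have "progeny n E t \<subset> progeny n E i" using sub by auto
  then show ?thesis unfolding prog_def by (simp add: psubset_card_mono progeny_fin)
qed

lemma succ_asym: "prog_succ n E a b \<Longrightarrow> \<not> prog_succ n E b a"
  by (auto simp: prog_succ_def)

lemma chain:
  assumes "acyclic E" "influential n E s" "influential n E t" "s \<noteq> t"
  shows "(s,t) \<in> E\<^sup>+ \<or> (t,s) \<in> E\<^sup>+"
proof (rule ccontr)
  assume nc: "\<not> ((s,t) \<in> E\<^sup>+ \<or> (t,s) \<in> E\<^sup>+)"
  have ss: "(s,s) \<notin> E\<^sup>+" "(t,t) \<notin> E\<^sup>+" using assms(1) unfolding acyclic_def by auto
  have sa: "s \<in> agents n" "t \<in> agents n" using assms(2,3) unfolding influential_def by auto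
  have "prog_succ n (E - {s}\<times>UNIV) s t" using assms(2,4) sa unfolding influential_def by auto
  then have 1: "prog_succ n E s t"
    unfolding prog_succ_def prog_def using progeny_del[of s s E n] progeny_del[of s t E n] ss nc
    by auto
  have "prog_succ n (E - {t}\<times>UNIV) t s" using assms(3,4) sa unfolding influential_def by auto
  then have 2: "prog_succ n E t s"
    unfolding prog_succ_def prog_def using progeny_del[of t t E n] progeny_del[of t s E n] ss nc
    by auto
  show False using 1 2 succ_asym by blast
qed

lemma succ_of_path:
  assumes "acyclic E" "(t,i) \<in> E\<^sup>+" "t \<in> agents n" "i \<in> agents n"
  shows "prog_succ n E i t"
  using prog_lt[OF assms] unfolding prog_succ_def by auto

lemma fair_geo: "fair geometric"
  unfolding fair_def
proof (intro allI impI)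
  fix n G G' s1
  assume a: "is_dag n G \<and> is_dag n G' \<and> inf_set n G = inf_set n G' \<and>
        s1 \<in> inf_set n G \<and> (\<forall>t \<in> inf_set n G. t \<noteq> s1 \<longrightarrow> prog_succ n G s1 t) \<and>
        (\<forall>t \<in> inf_set n G'. t \<noteq> s1 \<longrightarrow> prog_succ n G' s1 t) \<and>
        induced_sub n G s1 = induced_sub n G' s1"
  have "{t \<in> inf_set n G. t = s1 \<or> prog_succ n G s1 t} = inf_set n G" using a by auto
  moreover have "{t \<in> inf_set n G'. t = s1 \<or> prog_succ n G' s1 t} = inf_set n G'" using a by auto
  ultimately show "geometric n G s1 = geometric n G' s1"
    unfolding geometric_def using a by simp
qed

lemma ic_geo: "incentive_compatible geometric"
  unfolding incentive_compatible_def
proof (intro allI impI)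
  fix n i \<theta> \<theta>'
  assume a: "is_dag n (graph_of n \<theta>) \<and> i \<in> agents n \<and> (\<forall>k \<in> agents n. \<theta>' k \<subseteq> \<theta> k)"
  define F where "F = graph_of n (\<theta>'(i := \<theta> i))"
  define L where "L = graph_of n \<theta>'"
  have FT: "F \<subseteq> graph_of n \<theta>" using a unfolding F_def graph_of_def by (auto split: if_splits; blast)
  have acF: "acyclic F" using a FT acyclic_subset unfolding is_dag_def by blast
  have LF: "L \<subseteq> F" using a unfolding F_def L_def graph_of_def by (auto; blast)
  have acL: "acyclic L" using acF LF acyclic_subset by blast
  have FLi: "F - {i}\<times>UNIV = L - {i}\<times>UNIV" unfolding F_def L_def graph_of_def by auto
  have FL: "F - {i}\<times>UNIV \<subseteq> L" using FLi by auto
  have infi: "influential n F i = influential n L i"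
    unfolding influential_def FLi ..
  show "geometric n L i \<le> geometric n F i"
  proof (cases "influential n F i")
    case False
    then show ?thesis using infi unfolding geometric_def inf_set_def by simp
  next
    case True
    have sub: "{t \<in> inf_set n F. t = i \<or> prog_succ n F i t}
        \<subseteq> {t \<in> inf_set n L. t = i \<or> prog_succ n L i t}"
    proof
      fix t assume t: "t \<in> {t \<in> inf_set n F. t = i \<or> prog_succ n F i t}"
      show "t \<in> {t \<in> inf_set n L. t = i \<or> prog_succ n L i t}"
      proof (cases "t = i")
        case True
        then show ?thesis using t infi unfolding inf_set_def by auto
      next
        case ne: False
        have tinf: "influential n F t" and su: "prog_succ n F i t" using t ne unfolding inf_set_def by auto
        have ta: "t \<in> agents n" using tinf unfolding influential_def by auto
        have ia: "i \<in> agents n" using a by auto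
        have "(t,i) \<in> F\<^sup>+"
        proof (rule ccontr)
          assume "(t,i) \<notin> F\<^sup>+"
          then have "(i,t) \<in> F\<^sup>+" using chain[OF acF True tinf] ne by auto
          then have "prog_succ n F t i" using succ_of_path[OF acF _ ia ta] by auto
          then show False using su succ_asym by blast
        qed
        have ii: "(i,i) \<notin> F\<^sup>+" using acF unfolding acyclic_def by auto
        have "(t,i) \<in> (F - {i}\<times>UNIV)\<^sup>*" using path_avoid[OF _ ii] \<open>(t,i) \<in> F\<^sup>+\<close> by (meson trancl_into_rtrancl)
        then have "(t,i) \<in> L\<^sup>*" using rtrancl_mono[OF FL] by auto
        then have tiL: "(t,i) \<in> L\<^sup>+" using ne by (meson rtranclD)
        have suL: "prog_succ n L i t" using succ_of_path[OF acL tiL ta ia] .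
        define Ft where "Ft = F - {t}\<times>UNIV"
        define Lt where "Lt = L - {t}\<times>UNIV"
        have LtFt: "Lt \<subseteq> Ft" unfolding Lt_def Ft_def using LF by auto
        have itFt: "(i,t) \<notin> Ft\<^sup>+"
        proof
          assume "(i,t) \<in> Ft\<^sup>+"
          then have "(i,t) \<in> F\<^sup>+" using trancl_mono[of _ Ft F] unfolding Ft_def by auto
          then have "(i,i) \<in> F\<^sup>+" using \<open>(t,i) \<in> F\<^sup>+\<close> by auto
          then show False using ii by simp
        qed
        have "progeny n Ft t = progeny n (Ft - {i}\<times>UNIV) t" using progeny_del[OF itFt] by simp
        also have "\<dots> \<subseteq> progeny n Lt t"
          unfolding progeny_def using rtrancl_mono[of "Ft - {i}\<times>UNIV" Lt] FL
          unfolding Ft_def Lt_def by auto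
        finally have "prog n Ft t \<le> prog n Lt t" unfolding prog_def
          by (simp add: card_mono progeny_fin)
        then have eqt: "prog n Lt t = prog n Ft t" using prog_mono[OF LtFt, of n t] by auto
        have "influential n L t"
          unfolding influential_def
        proof (intro conjI ballI impI)
          show "t \<in> agents n" by (rule ta)
          fix j assume "j \<in> agents n" "j \<noteq> t"
          then have "prog_succ n Ft t j" using tinf unfolding influential_def Ft_def by auto
          moreover have "prog n Lt j \<le> prog n Ft j" using prog_mono[OF LtFt] by auto
          ultimately show "prog_succ n (L - {t}\<times>UNIV) t j"
            using eqt unfolding prog_succ_def Lt_def by auto
        qed
        then show ?thesis using suL unfolding inf_set_def by auto
      qed
    qed
    have fin: "finite {t \<in> inf_set n L. t = i \<or> prog_succ n L i t}"
      by (rule finite_subset[of _ "agents n"]) (auto simp: inf_set_def influential_def agents_def)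
    have "card {t \<in> inf_set n F. t = i \<or> prog_succ n F i t}
        \<le> card {t \<in> inf_set n L. t = i \<or> prog_succ n L i t}"
      using card_mono[OF fin sub] .
    then have "(1::real) / 2 ^ card {t \<in> inf_set n L. t = i \<or> prog_succ n L i t}
        \<le> 1 / 2 ^ card {t \<in> inf_set n F. t = i \<or> prog_succ n F i t}"
      by (rule pow_frac_le)
    then show ?thesis using True infi unfolding geometric_def inf_set_def by simp
  qed
qed

theorem theorem1:
  shows "incentive_compatible geometric \<and> fair geometric"
  using ic_geo fair_geo by simp

end
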